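(* Let $L\in\mathrm{Mat}_N(\mathbb{Z})$ be symmetric positive definite with even diagonal, $k\in\mathbb{Z}$, and $s\in\mathrm{Mat}_N(\mathbb{Z})$ with $\det s\ne0$; put $L'=L[s]=s^{\mathrm{tr}}Ls$. Let $\phi\in\mathrm{J}_{k,L}$ with theta decomposition $\phi=\sum_{l\in\mathbb{Z}^N/L\mathbb{Z}^N}\theta_{L,l}h_l$, and let $\phi|U_s(\tau,z):=\phi(\tau,sz)$, an element of $\mathrm{J}_{k,L'}$ with theta decomposition $\sum_{\nu\in\mathbb{Z}^N/L'\mathbb{Z}^N}\theta_{L',\nu}h'_\nu$. Then $\Theta_{L'}(\phi|U_s)=\Theta_L(\phi)\uparrow_H^{D'}$; explicitly, for $\nu\in\mathbb{Z}^N$: if $\nu\equiv s^{\mathrm{tr}}\mu \pmod{s^{\mathrm{tr}}L\mathbb{Z}^N}$ for some $\mu\in\mathbb{Z}^N$ then $h'_\nu=h_\mu$, and if $\nu\notin s^{\mathrm{tr}}\mathbb{Z}^N$ then $h'_\nu=0$.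
   Context: Notation $e(x)=\exp(2\pi ix)$, $q=e(\tau)$, $\zeta^r=e(r^{\mathrm{tr}}z)$, $L[z]=z^{\mathrm{tr}}Lz$, $|L|=\det L$, $L^\#=|L|L^{-1}$. $\mathrm{J}_{k,L}$ is the space of Jacobi forms of weight $k$ and index $L$: holomorphic $\phi:\mathbb{H}\times\mathbb{C}^N\to\mathbb{C}$ with $(c\tau+d)^{-k}e\big(-\tfrac{cL[z+\lambda\tau+\mu]}{2(c\tau+d)}+\tfrac{\tau L[\lambda]}{2}+\lambda^{\mathrm{tr}}Lz\big)\phi\big(\tfrac{a\tau+b}{c\tau+d},\tfrac{z+\lambda\tau+\mu}{c\tau+d}\big)=\phi(\tau,z)$ for all $\begin{pmatrix}a&b\\c&d\end{pmatrix}\in\mathrm{SL}_2(\mathbb{Z})$, $\lambda,\mu\in\mathbb{Z}^N$, and with Fourier coefficients $c(n,r)$ (of $q^n\zeta^r$) vanishing unless $2|L|n-L^\#[r]\ge0$. For $l\in\mathbb{Z}^N$, $\theta_{L,l}(\tau,z)=\sum_{r\in\mathbb{Z}^N,\ r\equiv l\ (\mathrm{mod}\ L\mathbb{Z}^N)}q^{L^{-1}[r]/2}\zeta^r$. Every $\phi\in\mathrm{J}_{k,L}$ can be written uniquely as $\phi(\tau,z)=\sum_{l\in\mathbb{Z}^N/L\mathbb{Z}^N}\theta_{L,l}(\tau,z)h_l(\tau)$ with holomorphic $h_l$ on $\mathbb{H}$ (theta decomposition), and $\Theta_L(\phi):=\sum_l h_l\,\mathfrak{e}_l$, a vector valued modular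 form with values in $\mathbb{C}[\mathbb{Z}^N/L\mathbb{Z}^N]$. Here $\mathbb{Z}^N/L\mathbb{Z}^N$ is identified with the discriminant form $D=\mathrm{disc}\,\mathcal{L}$ of the lattice $\mathcal{L}$ with Gram matrix $L$ (quadratic form $l\mapsto L^{-1}[l]/2 \bmod 1$), and similarly $D'=\mathbb{Z}^N/L'\mathbb{Z}^N$. The subgroup $H=s^{\mathrm{tr}}L\mathbb{Z}^N/L'\mathbb{Z}^N\subseteq D'$ is isotropic, $H^\perp=s^{\mathrm{tr}}\mathbb{Z}^N/L'\mathbb{Z}^N$, and $l\mapsto s^{\mathrm{tr}}l$ induces an isomorphism $D\cong H^\perp/H$. For $f=\sum_{\delta\in H^\perp/H}f_\delta\mathfrak{e}_\delta$, the operator is $f\uparrow_H^{D'}=\sum_{\nu\in H^\perp}f_{\nu+H}\,\mathfrak{e}_\nu$. *)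

theory Defs
  imports "HOL-Analysis.Analysis"
begin

text \<open>Conventions: vectors in Z^N / C^N are modelled as int^'n / complex^'n, integer
  N x N matrices as int^'n^'n (N = CARD('n), arbitrary but fixed).\<close>

definition ee :: "complex \<Rightarrow> complex" where
  "ee x = exp (2 * of_real pi * \<i> * x)"

definition upper_half :: "complex set" where
  "upper_half = {\<tau>. Im \<tau> > 0}"

definition cmv :: "int^'n^'n \<Rightarrow> complex^'n \<Rightarrow> complex^'n" where
  "cmv s z = (\<chi> i. \<Sum>j\<in>UNIV. of_int (s$i$j) * z$j)"

definition cbil :: "int^'n^'n \<Rightarrow> complex^'n \<Rightarrow> complex^'n \<Rightarrow> complex" where
  "cbil L a b = (\<Sum>i\<in>UNIV. \<Sum>j\<in>UNIV. a$i * of_int (L$i$j) * b$j)"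

definition cqf :: "int^'n^'n \<Rightarrow> complex^'n \<Rightarrow> complex" where
  "cqf L z = cbil L z z"

definition int_to_cvec :: "int^'n \<Rightarrow> complex^'n" where
  "int_to_cvec v = (\<chi> i. of_int (v$i))"

definition realmat :: "int^'n^'n \<Rightarrow> real^'n^'n" where
  "realmat L = (\<chi> i j. real_of_int (L$i$j))"

text \<open>L^{-1}[r] (a rational, here real, number).\<close>
definition inv_qf :: "int^'n^'n \<Rightarrow> int^'n \<Rightarrow> real" where
  "inv_qf L r = (let v = (\<chi> i. real_of_int (r$i)) in v \<bullet> (matrix_inv (realmat L) *v v))"

definition adj_qf :: "int^'n^'n \<Rightarrow> int^'n \<Rightarrow> real" where
  "adj_qf L r = real_of_int (det L) * inv_qf L r"

definition symmetric_pd_even :: "int^'n^'n \<Rightarrow> bool" where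
  "symmetric_pd_even L \<longleftrightarrow>
     transpose L = L \<and>
     (\<forall>x::real^'n. x \<noteq> 0 \<longrightarrow> x \<bullet> (realmat L *v x) > 0) \<and>
     (\<forall>i. even (L$i$i))"

text \<open>Holomorphy of a function on H x C^N: complex (Frechet) differentiability, i.e.
  real differentiability with a complex-linear derivative.\<close>
definition holo_HxCN :: "(complex \<Rightarrow> complex^'n \<Rightarrow> complex) \<Rightarrow> bool" where
  "holo_HxCN \<phi> \<longleftrightarrow>
     (\<forall>\<tau> z. Im \<tau> > 0 \<longrightarrow>
        (\<exists>D. ((\<lambda>p. \<phi> (fst p) (snd p)) has_derivative D) (at (\<tau>, z)) \<and>
             (\<forall>c t w. D (c * t, c *s w) = c * D (t, w))))"

definition jacobi_form :: "int \<Rightarrow> int^'n^'n \<Rightarrow> (complex \<Rightarrow> complex^'n \<Rightarrow> complex) \<Rightarrow> bool" where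
  "jacobi_form k L \<phi> \<longleftrightarrow>
     holo_HxCN \<phi> \<and>
     (\<forall>a b c d :: int. \<forall>lam mu :: int^'n. \<forall>\<tau> z. a * d - b * c = 1 \<longrightarrow> Im \<tau> > 0 \<longrightarrow>
        (let j = of_int c * \<tau> + of_int d;
             w = z + \<tau> *s int_to_cvec lam + int_to_cvec mu in
         j powi (-k) *
         ee (- (of_int c * cqf L w) / (2 * j) + \<tau> * cqf L (int_to_cvec lam) / 2
             + cbil L (int_to_cvec lam) z) *
         \<phi> ((of_int a * \<tau> + of_int b) / j) ((1 / j) *s w) = \<phi> \<tau> z)) \<and>
     (\<exists>cf :: int \<Rightarrow> int^'n \<Rightarrow> complex.
        (\<forall>n r. cf n r \<noteq> 0 \<longrightarrow> 2 * real_of_int (det L) * real_of_int n - adj_qf L r \<ge> 0) \<and>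
        (\<forall>\<tau> z. Im \<tau> > 0 \<longrightarrow>
           ((\<lambda>(n, r). cf n r * ee (of_int n * \<tau> + (\<Sum>i\<in>UNIV. of_int (r$i) * z$i)))
              has_sum \<phi> \<tau> z) UNIV))"

text \<open>The class l + L Z^N, and the discriminant group Z^N / L Z^N as the set of classes.\<close>
definition lat_coset :: "int^'n^'n \<Rightarrow> int^'n \<Rightarrow> (int^'n) set" where
  "lat_coset L l = {l + L *v x | x. True}"

definition disc :: "int^'n^'n \<Rightarrow> (int^'n) set set" where
  "disc L = range (lat_coset L)"

text \<open>theta_{L,l} with l given through its class C = l + L Z^N.\<close>
definition theta :: "int^'n^'n \<Rightarrow> (int^'n) set \<Rightarrow> complex \<Rightarrow> complex^'n \<Rightarrow> complex" where
  "theta L C \<tau> z =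
     (\<Sum>\<^sub>\<infinity>r\<in>C. ee (\<tau> * of_real (inv_qf L r) / 2 + (\<Sum>i\<in>UNIV. of_int (r$i) * z$i)))"

definition theta_decomp ::
  "int^'n^'n \<Rightarrow> (complex \<Rightarrow> complex^'n \<Rightarrow> complex) \<Rightarrow> ((int^'n) set \<Rightarrow> complex \<Rightarrow> complex) \<Rightarrow> bool" where
  "theta_decomp L \<phi> h \<longleftrightarrow>
     (\<forall>C\<in>disc L. h C holomorphic_on upper_half) \<and>
     (\<forall>\<tau> z. Im \<tau> > 0 \<longrightarrow> \<phi> \<tau> z = (\<Sum>C\<in>disc L. theta L C \<tau> z * h C \<tau>))"

definition U_op :: "int^'n^'n \<Rightarrow> (complex \<Rightarrow> complex^'n \<Rightarrow> complex) \<Rightarrow> complex \<Rightarrow> complex^'n \<Rightarrow> complex" where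
  "U_op s \<phi> \<tau> z = \<phi> \<tau> (cmv s z)"

end

theory Submission
  imports Defs
begin


definition rv :: "int^'n \<Rightarrow> real^'n" where "rv x = (\<chi> i. real_of_int (x$i))"

lemma rv_mult: "rv (M *v x) = realmat M *v rv x"
  by (simp add: rv_def realmat_def matrix_vector_mult_def vec_eq_iff of_int_sum)

lemma realmat_mul: "realmat (A ** B) = realmat A ** realmat B"
  by (simp add: realmat_def matrix_matrix_mult_def vec_eq_iff of_int_sum)

lemma realmat_transpose: "realmat (transpose A) = transpose (realmat A)"
  by (simp add: realmat_def transpose_def vec_eq_iff)

lemma det_realmat: "det (realmat A) = real_of_int (det A)"
  unfolding det_def realmat_def by (simp add: of_int_sum of_int_prod)

lemma rv_inj: "rv x = rv y \<Longrightarrow> x = y"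
  by (simp add: rv_def vec_eq_iff)

lemma rv_0[simp]: "rv 0 = 0" by (simp add: rv_def vec_eq_iff)

lemma matrix_inv_props:
  assumes "invertible A"
  shows "A ** matrix_inv A = mat 1 \<and> matrix_inv A ** A = mat 1"
  using assms unfolding invertible_def matrix_inv_def by (rule someI_ex)

lemma posdef_invertible:
  fixes A :: "real^'n^'n"
  assumes "\<forall>x. x\<noteq>0 \<longrightarrow> x \<bullet> (A *v x) > 0"
  shows "invertible A"
proof -
  have "\<forall>x. A *v x = 0 \<longrightarrow> x = 0" using assms by force
  then show ?thesis using matrix_left_invertible_ker invertible_left_inverse by blast
qed

lemma inv_apply:
  fixes A :: "real^'n^'n"
  assumes "invertible A" "A *v y = v"
  shows "matrix_inv A *v v = y"
  using matrix_inv_props[OF assms(1)] assms(2)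
  by (metis matrix_vector_mul_assoc matrix_vector_mul_lid)

lemma inv_apply2:
  fixes A :: "real^'n^'n"
  assumes "invertible A"
  shows "A *v (matrix_inv A *v v) = v"
  using matrix_inv_props[OF assms(1)]
  by (metis matrix_vector_mul_assoc matrix_vector_mul_lid)

lemma inner_sym_mat:
  fixes A :: "real^'n^'n"
  assumes "transpose A = A"
  shows "(A *v y) \<bullet> x = y \<bullet> (A *v x)"
  by (metis assms dot_lmul_matrix inner_commute transpose_matrix_vector)

lemma inv_posdef:
  fixes A :: "real^'n^'n"
  assumes "transpose A = A" "\<forall>x. x\<noteq>0 \<longrightarrow> x \<bullet> (A *v x) > 0"
  shows "\<forall>x. x\<noteq>0 \<longrightarrow> x \<bullet> (matrix_inv A *v x) > 0"
proof (intro allI impI)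
  fix x :: "real^'n" assume x: "x \<noteq> 0"
  have inv: "invertible A" using posdef_invertible assms(2) by blast
  define y where "y = matrix_inv A *v x"
  have Ay: "A *v y = x" using inv_apply2[OF inv] y_def by simp
  have "y \<noteq> 0" using Ay x by auto
  then have "y \<bullet> (A *v y) > 0" using assms(2) by blast
  then show "x \<bullet> (matrix_inv A *v x) > 0"
    using inner_sym_mat[OF assms(1), of y y] Ay y_def by simp
qed

lemma posdef_bound:
  fixes P :: "real^'n^'n"
  assumes "\<forall>x. x\<noteq>0 \<longrightarrow> x \<bullet> (P *v x) > 0"
  shows "\<exists>c>0. \<forall>x. x \<bullet> (P *v x) \<ge> c * (x \<bullet> x)"
proof -
  have cont: "continuous_on (sphere 0 1) (\<lambda>x. x \<bullet> (P *v x))"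
    by (intro continuous_intros linear_continuous_on matrix_vector_mul_bounded_linear)
  have ne: "sphere (0::real^'n) 1 \<noteq> {}" by simp
  obtain u where u: "u \<in> sphere 0 1" and umin: "\<forall>y\<in>sphere 0 1. u \<bullet> (P *v u) \<le> y \<bullet> (P *v y)"
    using continuous_attains_inf[OF compact_sphere ne cont] by blast
  have "u \<noteq> 0" using u by auto
  then have cpos: "u \<bullet> (P *v u) > 0" using assms by blast
  show ?thesis
  proof (intro exI[of _ "u \<bullet> (P *v u)"] conjI allI cpos)
    fix x :: "real^'n"
    show "x \<bullet> (P *v x) \<ge> (u \<bullet> (P *v u)) * (x \<bullet> x)"
    proof (cases "x = 0")
      case True then show ?thesis by simp
    next
      case False
      define t where "t = norm x"
      have t: "t > 0" using False t_def by simp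
      define y where "y = (1/t) *\<^sub>R x"
      have ys: "y \<in> sphere 0 1" using t y_def t_def by simp
      have xy: "x = t *\<^sub>R y" using t y_def by simp
      have "x \<bullet> (P *v x) = t^2 * (y \<bullet> (P *v y))"
        by (simp add: xy matrix_vector_mult_scaleR power2_eq_square)
      moreover have "x \<bullet> x = t^2" using t_def by (simp add: power2_norm_eq_inner)
      moreover have "u \<bullet> (P *v u) \<le> y \<bullet> (P *v y)" using umin ys by blast
      ultimately show ?thesis using t by (simp add: mult_left_mono)
    qed
  qed
qed



lemma geo_int_sum:
  fixes m :: nat
  shows "(\<Sum>k\<in>{-int m..int m}. exp (- real_of_int \<bar>k\<bar>)) =
         1 + 2 * exp (-1) * (1 - exp (-1) ^ m) / (1 - exp (-1))"
proof (induction m)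
  case 0
  then show ?case by simp
next
  case (Suc m)
  let ?x = "exp (-1::real)"
  have x1: "?x < 1" by simp
  have set: "{-int (Suc m)..int (Suc m)} = insert (int (Suc m)) (insert (-int (Suc m)) {-int m..int m})"
    by auto
  have e: "exp (- real_of_int \<bar>int (Suc m)\<bar>) = ?x ^ Suc m"
  proof -
    have "exp (- real_of_int \<bar>int (Suc m)\<bar>) = exp (real (Suc m) * (-1))" by simp
    also have "\<dots> = ?x ^ Suc m" by (rule exp_of_nat_mult)
    finally show ?thesis .
  qed
  have e2: "exp (- real_of_int \<bar>- int (Suc m)\<bar>) = ?x ^ Suc m"
    using e by (simp only: abs_minus_cancel)
  have "(\<Sum>k\<in>{-int (Suc m)..int (Suc m)}. exp (- real_of_int \<bar>k\<bar>)) =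
        2 * ?x ^ Suc m + (\<Sum>k\<in>{-int m..int m}. exp (- real_of_int \<bar>k\<bar>))"
    unfolding set using e e2 by simp
  also have "\<dots> = 1 + 2 * ?x * (1 - ?x ^ Suc m) / (1 - ?x)"
  proof -
    have alg: "2 * y ^ Suc m + (1 + 2 * y * (1 - y ^ m) / (1 - y)) = 1 + 2 * y * (1 - y ^ Suc m) / (1 - y)"
      if "y < 1" for y :: real
      using that by (simp add: field_simps)
    show ?thesis using alg[OF x1] Suc.IH by simp
  qed
  finally show ?case .
qed

lemma geo_int_bound:
  fixes m :: nat
  shows "(\<Sum>k\<in>{-int m..int m}. exp (- real_of_int \<bar>k\<bar>)) \<le> 1 + 2 * exp (-1) / (1 - exp (-1))"
proof -
  let ?x = "exp (-1::real)"
  have x1: "?x < 1" "?x > 0" by simp_all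
  have "?x ^ m \<ge> 0" by simp
  then have "2 * ?x * (1 - ?x ^ m) / (1 - ?x) \<le> 2 * ?x / (1 - ?x)"
    using x1 by (simp add: divide_right_mono mult_left_mono)
  then show ?thesis using geo_int_sum[of m] by simp
qed

lemma box_mem:
  fixes r :: "int^'n"
  assumes "\<forall>i. \<bar>r$i\<bar> \<le> int m"
  shows "r \<in> vec_lambda ` PiE UNIV (\<lambda>_. {-int m..int m})"
proof -
  have "(\<lambda>i. r$i) \<in> PiE UNIV (\<lambda>_. {-int m..int m})" using assms by (force simp: abs_le_iff)
  moreover have "r = vec_lambda (\<lambda>i. r$i)" by simp
  ultimately show ?thesis by blast
qed

lemma box_finite: "finite (vec_lambda ` PiE (UNIV::'n::finite set) (\<lambda>_. {-int m..int m}))"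
  by (intro finite_imageI finite_PiE) auto

lemma sum_box:
  fixes g :: "int \<Rightarrow> real"
  shows "(\<Sum>r\<in>vec_lambda ` PiE (UNIV::'n::finite set) (\<lambda>_. {-int m..int m}). \<Prod>i\<in>UNIV. g (r$i))
       = (\<Prod>i\<in>(UNIV::'n set). \<Sum>k\<in>{-int m..int m}. g k)"
proof -
  have inj: "inj_on vec_lambda (PiE (UNIV::'n set) (\<lambda>_. {-int m..int m}))"
    by (auto simp: inj_on_def)
  have "(\<Sum>r\<in>vec_lambda ` PiE (UNIV::'n set) (\<lambda>_. {-int m..int m}). \<Prod>i\<in>UNIV. g (r$i))
      = (\<Sum>p\<in>PiE (UNIV::'n set) (\<lambda>_. {-int m..int m}). \<Prod>i\<in>UNIV. g (p i))"
    by (simp add: sum.reindex[OF inj])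
  also have "\<dots> = (\<Prod>i\<in>(UNIV::'n set). \<Sum>k\<in>{-int m..int m}. g k)"
    by (rule prod_sum_PiE[symmetric]) auto
  finally show ?thesis .
qed

lemma prod_summable:
  fixes g :: "int \<Rightarrow> real"
  assumes g0: "\<And>k. g k \<ge> 0" and gb: "\<And>m::nat. (\<Sum>k\<in>{-int m..int m}. g k) \<le> S"
  shows "(\<lambda>r::int^'n. \<Prod>i\<in>UNIV. g (r$i)) summable_on UNIV"
proof (rule nonneg_bdd_above_summable_on)
  show "\<And>x. x \<in> UNIV \<Longrightarrow> 0 \<le> (\<Prod>i\<in>UNIV. g (x$i))" using g0 by (simp add: prod_nonneg)
  show "bdd_above (sum (\<lambda>r::int^'n. \<Prod>i\<in>UNIV. g (r$i)) ` {F. F \<subseteq> UNIV \<and> finite F})"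
  proof (rule bdd_aboveI2)
    fix F :: "(int^'n) set" assume "F \<in> {F. F \<subseteq> UNIV \<and> finite F}"
    then have fin: "finite F" by simp
    define m where "m = nat (\<Sum>r\<in>F. \<Sum>i\<in>UNIV. \<bar>r$i\<bar>)"
    have "\<forall>r\<in>F. \<forall>i. \<bar>r$i\<bar> \<le> int m"
    proof (intro ballI allI)
      fix r i assume r: "r \<in> F"
      have "\<bar>r$i\<bar> \<le> (\<Sum>i\<in>UNIV. \<bar>r$i\<bar>)" by (rule member_le_sum) auto
      also have "\<dots> \<le> (\<Sum>r\<in>F. \<Sum>i\<in>UNIV. \<bar>r$i\<bar>)"
        by (rule member_le_sum[OF r _ fin]) (simp add: sum_nonneg)
      finally have "\<bar>r$i\<bar> \<le> (\<Sum>r\<in>F. \<Sum>i\<in>UNIV. \<bar>r$i\<bar>)" .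
      moreover have "(\<Sum>r\<in>F. \<Sum>i\<in>UNIV. \<bar>r$i\<bar>) \<ge> 0" by (simp add: sum_nonneg)
      ultimately show "\<bar>r$i\<bar> \<le> int m" unfolding m_def by linarith
    qed
    then have sub: "F \<subseteq> vec_lambda ` PiE UNIV (\<lambda>_. {-int m..int m})"
      using box_mem by blast
    have "(\<Sum>r\<in>F. \<Prod>i\<in>UNIV. g (r$i)) \<le> (\<Sum>r\<in>vec_lambda ` PiE (UNIV::'n set) (\<lambda>_. {-int m..int m}). \<Prod>i\<in>UNIV. g (r$i))"
      by (rule sum_mono2[OF box_finite sub]) (simp add: g0 prod_nonneg)
    also have "\<dots> = (\<Prod>i\<in>(UNIV::'n set). \<Sum>k\<in>{-int m..int m}. g k)" by (rule sum_box)
    also have "\<dots> \<le> (\<Prod>i\<in>(UNIV::'n set). S)"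
      by (rule prod_mono) (simp add: g0 sum_nonneg gb)
    finally show "(\<Sum>r\<in>F. \<Prod>i\<in>UNIV. g (r$i)) \<le> S ^ CARD('n)" by simp
  qed
qed



definition pd :: "int^'n^'n \<Rightarrow> bool" where
  "pd M \<longleftrightarrow> transpose (realmat M) = realmat M \<and> (\<forall>x. x \<noteq> 0 \<longrightarrow> x \<bullet> (realmat M *v x) > 0)"

definition tM :: "int^'n^'n \<Rightarrow> complex \<Rightarrow> int^'n \<Rightarrow> complex^'n \<Rightarrow> complex" where
  "tM M \<tau> r z = ee (\<tau> * of_real (inv_qf M r) / 2 + (\<Sum>i\<in>UNIV. of_int (r$i) * z$i))"

lemma norm_ee: "norm (ee w) = exp (-2*pi*Im w)"
  by (simp add: ee_def)

lemma ee_add: "ee (a + b) = ee a * ee b"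
  by (simp add: ee_def distrib_left exp_add)

lemma ee_nonzero: "ee a \<noteq> 0" by (simp add: ee_def)

lemma inv_qf_rv: "inv_qf M r = rv r \<bullet> (matrix_inv (realmat M) *v rv r)"
  by (simp add: inv_qf_def rv_def Let_def)

lemma quad_bound:
  fixes a b t :: real
  assumes "a > 0"
  shows "- a * t^2 + b * \<bar>t\<bar> \<le> (b+1)^2 / (4*a) - \<bar>t\<bar>"
proof -
  have "0 \<le> (2*a*\<bar>t\<bar> - (b+1))^2" by simp
  also have "(2*a*\<bar>t\<bar> - (b+1))^2 = 4*a*(a*t^2 - (b+1)*\<bar>t\<bar>) + (b+1)^2"
    by (simp add: power2_eq_square algebra_simps)
  finally have "- (a*t^2 - (b+1)*\<bar>t\<bar>) \<le> (b+1)^2 / (4*a)"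
    using assms by (simp add: field_simps)
  then show ?thesis by (simp add: algebra_simps)
qed

lemma tM_abs_summable:
  fixes M :: "int^'n^'n"
  assumes "pd M" "Im \<tau> > 0"
  shows "(\<lambda>r. norm (tM M \<tau> r z)) summable_on UNIV"
proof -
  let ?P = "matrix_inv (realmat M)"
  have "\<forall>x. x \<noteq> 0 \<longrightarrow> x \<bullet> (?P *v x) > 0"
    using inv_posdef assms(1) unfolding pd_def by blast
  then obtain c where c: "c > 0" "\<forall>x. x \<bullet> (?P *v x) \<ge> c * (x \<bullet> x)"
    using posdef_bound by blast
  define a where "a = pi * Im \<tau> * c"
  have a: "a > 0" using c assms(2) a_def by simp
  define B where "B = (\<Sum>j\<in>UNIV. \<bar>Im (z$j)\<bar>)"
  define b where "b = 2 * pi * B"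
  define K where "K = (b+1)^2 / (4*a)"
  define g where "g k = exp K * exp (- real_of_int \<bar>k\<bar>)" for k :: int
  have g0: "g k \<ge> 0" for k by (simp add: g_def)
  have gb: "(\<Sum>k\<in>{-int m..int m}. g k) \<le> exp K * (1 + 2 * exp (-1) / (1 - exp (-1)))" for m :: nat
    unfolding g_def sum_distrib_left[symmetric] using geo_int_bound[of m] by simp
  have Gs: "(\<lambda>r::int^'n. \<Prod>i\<in>UNIV. g (r$i)) summable_on UNIV"
    by (rule prod_summable[OF g0 gb])
  have bound: "norm (tM M \<tau> r z) \<le> norm (\<Prod>i\<in>UNIV. g (r$i))" for r
  proof -
    define q where "q = inv_qf M r"
    have q: "q \<ge> c * (\<Sum>i\<in>UNIV. (real_of_int (r$i))^2)"
      using c(2)[rule_format, of "rv r"] unfolding q_def inv_qf_rv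
      by (simp add: inner_vec_def rv_def power2_eq_square)
    have im: "Im (\<tau> * of_real q / 2 + (\<Sum>i\<in>UNIV. of_int (r$i) * z$i)) =
              Im \<tau> * q / 2 + (\<Sum>i\<in>UNIV. real_of_int (r$i) * Im (z$i))"
      by simp
    have t1: "- pi * Im \<tau> * q \<le> (\<Sum>i\<in>UNIV. - a * (real_of_int (r$i))^2)"
    proof -
      have "pi * Im \<tau> * (c * (\<Sum>i\<in>UNIV. (real_of_int (r$i))^2)) \<le> pi * Im \<tau> * q"
        using q assms(2) by (simp add: mult_left_mono)
      then show ?thesis by (simp add: a_def sum_distrib_left sum_negf algebra_simps)
    qed
    have t2: "- (2*pi) * (\<Sum>i\<in>UNIV. real_of_int (r$i) * Im (z$i)) \<le> (\<Sum>i\<in>UNIV. b * \<bar>real_of_int (r$i)\<bar>)"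
    proof -
      have "- (real_of_int (r$i) * Im (z$i)) \<le> \<bar>real_of_int (r$i)\<bar> * B" for i
      proof -
        have "\<bar>Im (z$i)\<bar> \<le> B" unfolding B_def by (rule member_le_sum) auto
        then have "\<bar>real_of_int (r$i)\<bar> * \<bar>Im (z$i)\<bar> \<le> \<bar>real_of_int (r$i)\<bar> * B"
          by (simp add: mult_left_mono)
        moreover have "- (real_of_int (r$i) * Im (z$i)) \<le> \<bar>real_of_int (r$i)\<bar> * \<bar>Im (z$i)\<bar>"
          by (metis abs_ge_minus_self abs_mult)
        ultimately show ?thesis by linarith
      qed
      then have "(\<Sum>i\<in>UNIV. - (real_of_int (r$i) * Im (z$i))) \<le> (\<Sum>i\<in>UNIV. \<bar>real_of_int (r$i)\<bar> * B)"
        by (rule sum_mono)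
      then have "(2*pi) * (\<Sum>i\<in>UNIV. - (real_of_int (r$i) * Im (z$i))) \<le> (2*pi) * (\<Sum>i\<in>UNIV. \<bar>real_of_int (r$i)\<bar> * B)"
        by (simp add: mult_left_mono)
      then show ?thesis by (simp add: b_def sum_distrib_left sum_negf algebra_simps)
    qed
    have t3: "(\<Sum>i\<in>UNIV. - a * (real_of_int (r$i))^2 + b * \<bar>real_of_int (r$i)\<bar>) \<le> (\<Sum>i\<in>(UNIV::'n set). K - \<bar>real_of_int (r$i)\<bar>)"
      by (rule sum_mono) (use quad_bound[OF a] K_def in auto)
    have "-2*pi*Im (\<tau> * of_real q / 2 + (\<Sum>i\<in>UNIV. of_int (r$i) * z$i)) \<le> (\<Sum>i\<in>(UNIV::'n set). K - \<bar>real_of_int (r$i)\<bar>)"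
    proof -
      have t4: "(\<Sum>i\<in>UNIV. - a * (real_of_int (r$i))^2 + b * \<bar>real_of_int (r$i)\<bar>) =
                (\<Sum>i\<in>UNIV. - a * (real_of_int (r$i))^2) + (\<Sum>i\<in>UNIV. b * \<bar>real_of_int (r$i)\<bar>)"
        by (rule sum.distrib)
      have t5: "-2*pi*Im (\<tau> * of_real q / 2 + (\<Sum>i\<in>UNIV. of_int (r$i) * z$i)) =
         - pi * Im \<tau> * q + - (2*pi) * (\<Sum>i\<in>UNIV. real_of_int (r$i) * Im (z$i))"
        unfolding im by (simp add: algebra_simps)
      show ?thesis using t1 t2 t3 t4 t5 by linarith
    qed
    then have "norm (tM M \<tau> r z) \<le> exp (\<Sum>i\<in>(UNIV::'n set). K - \<bar>real_of_int (r$i)\<bar>)"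
      unfolding tM_def norm_ee q_def[symmetric] by simp
    also have "\<dots> = (\<Prod>i\<in>UNIV. g (r$i))"
      by (simp add: exp_sum g_def exp_diff exp_minus field_simps)
    also have "\<dots> = norm (\<Prod>i\<in>UNIV. g (r$i))" using g0 by (simp add: prod_nonneg)
    finally show ?thesis .
  qed
  have "(\<lambda>r::int^'n. norm (\<Prod>i\<in>UNIV. g (r$i))) summable_on UNIV"
    using Gs g0 by (simp add: prod_nonneg)
  then show ?thesis
    by (rule Infinite_Sum.abs_summable_on_comparison_test) (use bound in auto)
qed

lemma tM_summable:
  assumes "pd M" "Im \<tau> > 0"
  shows "(\<lambda>r. tM M \<tau> r z) summable_on A"
  using tM_abs_summable[OF assms] summable_on_iff_abs_summable_on_complex summable_on_subset_banach
  by blast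

lemma coef_summable:
  assumes "pd M" "Im \<tau> > 0" "\<And>r. norm (f r) \<le> Bd"
  shows "(\<lambda>r. f r * tM M \<tau> r z) summable_on A"
proof -
  have "(\<lambda>r. norm (f r * tM M \<tau> r z)) summable_on UNIV"
  proof (rule Infinite_Sum.abs_summable_on_comparison_test)
    show "(\<lambda>r. norm (of_real Bd * tM M \<tau> r z)) summable_on UNIV"
      using tM_abs_summable[OF assms(1,2)] by (simp add: norm_mult summable_on_cmult_right)
    show "norm (f r * tM M \<tau> r z) \<le> norm (of_real Bd * tM M \<tau> r z)" for r
    proof -
      have "Bd \<ge> 0" using assms(3)[of r] norm_ge_zero order_trans by blast
      then show ?thesis using assms(3)[of r] by (simp add: norm_mult mult_right_mono)
    qed
  qed
  then show ?thesis
    using summable_on_iff_abs_summable_on_complex summable_on_subset_banach by blast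
qed



lemma lat_coset_shift: "lat_coset M (a + M *v x) = lat_coset M a"
proof -
  have "lat_coset M (a + M *v x) \<subseteq> lat_coset M a"
  proof
    fix v assume "v \<in> lat_coset M (a + M *v x)"
    then obtain y where "v = a + M *v x + M *v y" unfolding lat_coset_def by blast
    then have "v = a + M *v (x + y)" by (simp add: matrix_vector_right_distrib add.assoc)
    then show "v \<in> lat_coset M a" unfolding lat_coset_def by blast
  qed
  moreover have "lat_coset M a \<subseteq> lat_coset M (a + M *v x)"
  proof
    fix v assume "v \<in> lat_coset M a"
    then obtain y where "v = a + M *v y" unfolding lat_coset_def by blast
    then have "v = a + M *v x + M *v (y - x)" by (simp add: matrix_vector_mult_diff_distrib)
    then show "v \<in> lat_coset M (a + M *v x)" unfolding lat_coset_def by blast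
  qed
  ultimately show ?thesis by blast
qed

lemma mem_own: "a \<in> lat_coset M a"
  unfolding lat_coset_def by (rule CollectI, rule exI[of _ 0]) simp

lemma coset_eq_of_mem:
  assumes "b \<in> lat_coset M a"
  shows "lat_coset M b = lat_coset M a"
proof -
  obtain x where "b = a + M *v x" using assms unfolding lat_coset_def by blast
  then show ?thesis using lat_coset_shift by simp
qed

lemma mem_disc: "C \<in> disc M \<Longrightarrow> r \<in> C \<Longrightarrow> lat_coset M r = C"
  unfolding disc_def using coset_eq_of_mem by blast

lemma rv_diff: "rv (a - b) = rv a - rv b" by (simp add: rv_def vec_eq_iff)

lemma pd_invertible: "pd M \<Longrightarrow> invertible (realmat M)"
  unfolding pd_def using posdef_invertible by blast

lemma finite_disc:
  fixes M :: "int^'n^'n"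
  assumes "pd M"
  shows "finite (disc M)"
proof -
  let ?A = "realmat M"
  have inv: "invertible ?A" using pd_invertible[OF assms] .
  define K where "K = nat (\<Sum>i\<in>UNIV. \<Sum>j\<in>UNIV. \<bar>M$i$j\<bar>)"
  have "disc M \<subseteq> lat_coset M ` (vec_lambda ` PiE UNIV (\<lambda>_. {-int K..int K}))"
  proof
    fix C assume "C \<in> disc M"
    then obtain r where C: "C = lat_coset M r" unfolding disc_def by blast
    define y where "y = matrix_inv ?A *v rv r"
    define x :: "int^'n" where "x = (\<chi> i. \<lfloor>y$i\<rfloor>)"
    define r' where "r' = r - M *v x"
    have Ay: "?A *v y = rv r" using inv_apply2[OF inv] y_def by simp
    have "rv r' = ?A *v (y - rv x)"
      unfolding r'_def rv_diff rv_mult matrix_vector_mult_diff_distrib Ay ..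
    have bnd: "\<bar>r'$i\<bar> \<le> int K" for i
    proof -
      have "real_of_int (r'$i) = (rv r')$i" by (simp add: rv_def)
      also have "\<dots> = (\<Sum>j\<in>UNIV. real_of_int (M$i$j) * (y$j - real_of_int \<lfloor>y$j\<rfloor>))"
        unfolding \<open>rv r' = _\<close> by (simp add: matrix_vector_mult_def realmat_def rv_def x_def)
      finally have e: "real_of_int (r'$i) = \<dots>" .
      have "\<bar>\<Sum>j\<in>UNIV. real_of_int (M$i$j) * (y$j - real_of_int \<lfloor>y$j\<rfloor>)\<bar> \<le>
            (\<Sum>j\<in>UNIV. \<bar>real_of_int (M$i$j) * (y$j - real_of_int \<lfloor>y$j\<rfloor>)\<bar>)"
        by (rule sum_abs)
      also have "\<dots> \<le> (\<Sum>j\<in>UNIV. \<bar>real_of_int (M$i$j)\<bar>)"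
      proof (rule sum_mono)
        fix j
        have "0 \<le> y$j - real_of_int \<lfloor>y$j\<rfloor>" "y$j - real_of_int \<lfloor>y$j\<rfloor> < 1"
          by linarith+
        then show "\<bar>real_of_int (M$i$j) * (y$j - real_of_int \<lfloor>y$j\<rfloor>)\<bar> \<le> \<bar>real_of_int (M$i$j)\<bar>"
          by (simp add: abs_mult mult_left_le)
      qed
      finally have "real_of_int \<bar>r'$i\<bar> \<le> real_of_int (\<Sum>j\<in>UNIV. \<bar>M$i$j\<bar>)"
        using e by simp
      then have "\<bar>r'$i\<bar> \<le> (\<Sum>j\<in>UNIV. \<bar>M$i$j\<bar>)" by linarith
      also have "\<dots> \<le> (\<Sum>i\<in>UNIV. \<Sum>j\<in>UNIV. \<bar>M$i$j\<bar>)"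
        by (rule member_le_sum) (auto simp: sum_nonneg)
      finally show ?thesis unfolding K_def by linarith
    qed
    have "r = r' + M *v x" by (simp add: r'_def)
    then have "C = lat_coset M r'" using C lat_coset_shift[of M r' x] by simp
    then show "C \<in> lat_coset M ` (vec_lambda ` PiE UNIV (\<lambda>_. {-int K..int K}))"
      using box_mem[of r' K] bnd by blast
  qed
  then show ?thesis by (rule finite_subset) (intro finite_imageI box_finite)
qed



lemma theta_tM: "theta M C \<tau> z = infsum (\<lambda>r. tM M \<tau> r z) C"
  by (simp add: theta_def tM_def)

lemma theta_sum:
  fixes M :: "int^'n^'n" and c :: "(int^'n) set \<Rightarrow> complex"
  assumes pd: "pd M" and t: "Im \<tau> > 0"
  shows "(\<Sum>C\<in>disc M. theta M C \<tau> z * c C) = infsum (\<lambda>r. c (lat_coset M r) * tM M \<tau> r z) UNIV"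
proof -
  let ?F = "\<lambda>r. c (lat_coset M r) * tM M \<tau> r z"
  have fin: "finite (disc M)" using finite_disc[OF pd] .
  have bd: "norm (c (lat_coset M r)) \<le> (\<Sum>C\<in>disc M. norm (c C))" for r
    by (rule member_le_sum[where f = "\<lambda>C. norm (c C)", OF _ _ fin]) (auto simp: disc_def)
  have summ: "?F summable_on A" for A
    by (rule coef_summable[OF pd t bd])
  have each: "theta M C \<tau> z * c C = infsum ?F C" if "C \<in> disc M" for C
  proof -
    have "theta M C \<tau> z * c C = infsum (\<lambda>r. tM M \<tau> r z * c C) C"
      unfolding theta_tM by (rule infsum_cmult_left'[symmetric])
    also have "\<dots> = infsum ?F C"
      by (rule infsum_cong) (use mem_disc[OF that] in auto)
    finally show ?thesis .
  qed
  have "(\<Sum>C\<in>disc M. theta M C \<tau> z * c C) = (\<Sum>C\<in>disc M. infsum ?F C)"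
    using each by simp
  also have "\<dots> = infsum ?F (\<Union>C\<in>disc M. C)"
  proof (rule sum_infsum[OF fin summ])
    fix C C' assume "C \<in> disc M" "C' \<in> disc M" "C \<noteq> C'"
    then show "C \<inter> C' = {}" using mem_disc by blast
  qed
  also have "(\<Union>C\<in>disc M. C) = UNIV"
    using mem_own by (auto simp: disc_def)
  finally show ?thesis .
qed

lemma ee_0[simp]: "ee 0 = 1" by (simp add: ee_def)

lemma ee_sum: "finite A \<Longrightarrow> ee (\<Sum>i\<in>A. f i) = (\<Prod>i\<in>A. ee (f i))"
  by (induction A rule: finite_induct) (simp_all add: ee_add)

lemma ee_int: "ee (of_int n) = 1"
proof -
  have "ee (of_int n) = exp ((2 * of_int n * pi) * \<i>)" by (simp add: ee_def algebra_simps)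
  also have "\<dots> = 1" by (rule exp_integer_2pi) simp
  finally show ?thesis .
qed

lemma ee_eq_1_dvd:
  fixes k :: int and M :: nat
  assumes "M > 0" "ee (of_int k / of_nat M) = 1"
  shows "int M dvd k"
proof -
  have "exp (\<i> * of_real (2 * pi * (real_of_int k / real M))) = 1"
    using assms(2) by (simp add: ee_def algebra_simps)
  then obtain n :: int where "2 * pi * (real_of_int k / real M) = of_int (2 * n) * pi"
    by (auto simp: exp_eq_1)
  then have "(2*pi)*(real_of_int k / real M) = (2*pi)*real_of_int n" by (simp add: algebra_simps)
  moreover have "\<And>x y::real. (2*pi)*x = (2*pi)*y \<Longrightarrow> x = y" by simp
  ultimately have "real_of_int k / real M = of_int n" by blast
  then have "real_of_int k = real_of_int n * real M" using assms(1) by (simp add: field_simps)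
  then have "k = n * int M" by (metis of_int_eq_iff of_int_mult of_int_of_nat_eq)
  then show ?thesis by simp
qed

lemma char_sum_1:
  fixes k :: int and M :: nat
  assumes "M > 0"
  shows "(\<Sum>j\<in>{0..<int M}. ee (of_int (k * j) / of_nat M)) = (if int M dvd k then of_nat M else 0)"
proof -
  let ?w = "ee (of_int k / of_nat M)"
  have inj: "inj_on int {..<M}" by simp
  have img: "int ` {..<M} = {0..<int M}"
    by (auto simp: image_iff) (metis nat_less_iff int_nat_eq nonneg_int_cases lessThan_iff of_nat_less_iff)
  have pw: "ee (of_int (k * int j) / of_nat M) = ?w ^ j" for j :: nat
  proof -
    have "ee (of_int (k * int j) / of_nat M) = exp (of_nat j * (2 * of_real pi * \<i> * (of_int k / of_nat M)))"
      by (simp add: ee_def algebra_simps)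
    also have "\<dots> = ?w ^ j" by (simp only: ee_def exp_of_nat_mult)
    finally show ?thesis .
  qed
  have "(\<Sum>j\<in>{0..<int M}. ee (of_int (k * j) / of_nat M)) = (\<Sum>j<M. ee (of_int (k * int j) / of_nat M))"
    unfolding img[symmetric] by (simp only: sum.reindex[OF inj] o_def)
  also have "\<dots> = (\<Sum>j<M. ?w ^ j)" using pw by (simp only:)
  also have "\<dots> = (if ?w = 1 then of_nat M else (1 - ?w ^ M) / (1 - ?w))" by (rule sum_gp_strict)
  also have "\<dots> = (if int M dvd k then of_nat M else 0)"
  proof (cases "int M dvd k")
    case True
    then obtain n where "k = int M * n" by blast
    then have "of_int k / of_nat M = (of_int n :: complex)" using assms by simp
    then have "?w = 1" using ee_int by simp
    then show ?thesis using True by simp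
  next
    case False
    then have "?w \<noteq> 1" using ee_eq_1_dvd[OF assms] by blast
    moreover have "?w ^ M = 1"
    proof -
      have "?w ^ M = ee (of_int (k * int M) / of_nat M)" using pw[of M] by simp
      also have "\<dots> = ee (of_int k)" using assms by simp
      finally show ?thesis using ee_int by simp
    qed
    ultimately show ?thesis using False by simp
  qed
  finally show ?thesis .
qed



definition WW :: "nat \<Rightarrow> (int^'n) set" where
  "WW M = vec_lambda ` PiE UNIV (\<lambda>_. {0..<int M})"

lemma WW_finite: "finite (WW M)"
  unfolding WW_def by (intro finite_imageI finite_PiE) auto

lemma char_sum:
  fixes k :: "int^'n" and M :: nat
  assumes "M > 0"
  shows "(\<Sum>w\<in>WW M. ee (\<Sum>i\<in>UNIV. of_int (k$i * w$i) / of_nat M)) =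
         (if \<forall>i. int M dvd k$i then of_nat M ^ CARD('n) else 0)"
proof -
  have inj: "inj_on vec_lambda (PiE (UNIV::'n set) (\<lambda>_. {0..<int M}))"
    by (auto simp: inj_on_def)
  have "(\<Sum>w\<in>WW M. ee (\<Sum>i\<in>UNIV. of_int (k$i * w$i) / of_nat M)) =
        (\<Sum>w\<in>WW M. \<Prod>i\<in>UNIV. ee (of_int (k$i * w$i) / of_nat M))"
    by (simp add: ee_sum)
  also have "\<dots> = (\<Sum>p\<in>PiE (UNIV::'n set) (\<lambda>_. {0..<int M}). \<Prod>i\<in>UNIV. ee (of_int (k$i * p i) / of_nat M))"
    unfolding WW_def by (simp add: sum.reindex[OF inj])
  also have "\<dots> = (\<Prod>i\<in>(UNIV::'n set). \<Sum>j\<in>{0..<int M}. ee (of_int (k$i * j) / of_nat M))"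
    by (rule prod_sum_PiE[symmetric]) auto
  also have "\<dots> = (\<Prod>i\<in>(UNIV::'n set). if int M dvd k$i then of_nat M else 0)"
    using char_sum_1[OF assms] by simp
  also have "\<dots> = (if \<forall>i. int M dvd k$i then of_nat M ^ CARD('n) else 0)"
  proof (cases "\<forall>i. int M dvd k$i")
    case True then show ?thesis by simp
  next
    case False
    then obtain i where "\<not> int M dvd k$i" by blast
    then show ?thesis using False by (intro trans[OF prod_zero]) auto
  qed
  finally show ?thesis .
qed

lemma sum_infsum_swap:
  fixes f :: "'w \<Rightarrow> 'a \<Rightarrow> complex"
  assumes "finite W" "\<And>w. w \<in> W \<Longrightarrow> f w summable_on A"
  shows "(\<lambda>r. \<Sum>w\<in>W. f w r) summable_on A \<and> infsum (\<lambda>r. \<Sum>w\<in>W. f w r) A = (\<Sum>w\<in>W. infsum (f w) A)"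
  using assms
proof (induction W rule: finite_induct)
  case empty then show ?case by simp
next
  case (insert x F)
  then have IH: "(\<lambda>r. \<Sum>w\<in>F. f w r) summable_on A" "infsum (\<lambda>r. \<Sum>w\<in>F. f w r) A = (\<Sum>w\<in>F. infsum (f w) A)"
    by auto
  have fx: "f x summable_on A" using insert by simp
  show ?case
    using insert.hyps IH fx by (simp add: summable_on_add infsum_add)
qed

lemma fourier_unique:
  fixes a :: "int^'n \<Rightarrow> complex"
  assumes as: "(\<lambda>r. norm (a r)) summable_on UNIV"
    and z0: "\<And>z. infsum (\<lambda>r. a r * ee (\<Sum>i\<in>UNIV. of_int (r$i) * z$i)) UNIV = 0"
  shows "a \<nu> = 0"
proof (rule ccontr)
  assume ne: "a \<nu> \<noteq> 0"
  define \<epsilon> where "\<epsilon> = norm (a \<nu>)"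
  have \<epsilon>: "\<epsilon> > 0" using ne \<epsilon>_def by simp
  have asumU: "a summable_on UNIV" using as summable_on_iff_abs_summable_on_complex by blast
  have asum: "a summable_on A" for A using summable_on_subset_banach[OF asumU] by blast
  have nsum: "(\<lambda>r. norm (a r)) summable_on A" for A using summable_on_subset_banach[OF as] by blast
  obtain F0 where F0: "finite F0" "infsum (\<lambda>r. norm (a r)) (UNIV - F0) < \<epsilon>"
  proof -
    obtain F where F: "finite F" "dist (sum (\<lambda>r. norm (a r)) F) (infsum (\<lambda>r. norm (a r)) UNIV) \<le> \<epsilon>/2"
      using has_sum_finite_approximation[OF has_sum_infsum[OF as], of "\<epsilon>/2"] \<epsilon> by auto
    have "infsum (\<lambda>r. norm (a r)) (F \<union> (UNIV - F)) = infsum (\<lambda>r. norm (a r)) F + infsum (\<lambda>r. norm (a r)) (UNIV - F)"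
      by (rule infsum_Un_disjoint[OF nsum nsum]) auto
    then have "infsum (\<lambda>r. norm (a r)) (UNIV - F) = infsum (\<lambda>r. norm (a r)) UNIV - sum (\<lambda>r. norm (a r)) F"
      using F(1) by simp
    then have "infsum (\<lambda>r. norm (a r)) (UNIV - F) < \<epsilon>" using F(2) \<epsilon> unfolding dist_real_def by linarith
    then show ?thesis using that F(1) by blast
  qed
  define M where "M = Suc (nat (\<Sum>r\<in>F0. \<Sum>i\<in>UNIV. \<bar>r$i - \<nu>$i\<bar>))"
  have M0: "M > 0" by (simp add: M_def)
  define R where "R = {r. \<forall>i. int M dvd (r$i - \<nu>$i)}"
  have RF: "R - {\<nu>} \<subseteq> UNIV - F0"
  proof
    fix r assume r: "r \<in> R - {\<nu>}"
    have "r \<notin> F0"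
    proof
      assume rF: "r \<in> F0"
      obtain i where i: "r$i \<noteq> \<nu>$i" using r by (auto simp: vec_eq_iff)
      have "\<bar>r$i - \<nu>$i\<bar> \<le> (\<Sum>i\<in>UNIV. \<bar>r$i - \<nu>$i\<bar>)" by (rule member_le_sum) auto
      also have "\<dots> \<le> (\<Sum>r\<in>F0. \<Sum>i\<in>UNIV. \<bar>r$i - \<nu>$i\<bar>)"
        by (rule member_le_sum[OF rF _ F0(1)]) (simp add: sum_nonneg)
      finally have lt: "\<bar>r$i - \<nu>$i\<bar> < int M" unfolding M_def by linarith
      have "int M dvd (r$i - \<nu>$i)" using r R_def by auto
      then have "\<bar>int M\<bar> \<le> \<bar>r$i - \<nu>$i\<bar>" using i by (intro dvd_imp_le_int) auto
      then show False using lt by simp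
    qed
    then show "r \<in> UNIV - F0" by simp
  qed
  have key: "infsum a R = 0"
  proof -
    define N where "N = (of_nat M ^ CARD('n) :: complex)"
    have N0: "N \<noteq> 0" using M0 N_def by simp
    define g where "g w r = a r * ee (\<Sum>i\<in>UNIV. of_int ((r$i - \<nu>$i) * w$i) / of_nat M)" for w r
    have normee: "norm (ee (\<Sum>i\<in>UNIV. of_int (m i) / of_nat M)) = 1" for m :: "'n \<Rightarrow> int"
    proof -
      have "Im (\<Sum>i\<in>UNIV. (of_int (m i) / of_nat M :: complex)) = 0" by simp
      then show ?thesis by (simp add: norm_ee)
    qed
    have gs: "g w summable_on UNIV" for w
    proof -
      have "norm (g w r) = norm (a r)" for r
        unfolding g_def norm_mult normee by simp
      then have "(\<lambda>r. norm (g w r)) summable_on UNIV"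
        using as by simp
      then show ?thesis using summable_on_iff_abs_summable_on_complex by blast
    qed
    have step1: "infsum (g w) UNIV = 0" for w
    proof -
      define zw where "zw = (\<chi> i. (of_int (w$i) / of_nat M :: complex))"
      have "g w r = ee (- (\<Sum>i\<in>UNIV. of_int (\<nu>$i * w$i) / of_nat M)) * (a r * ee (\<Sum>i\<in>UNIV. of_int (r$i) * zw$i))" for r
      proof -
        have e: "(\<Sum>i\<in>UNIV. of_int ((r$i - \<nu>$i) * w$i) / of_nat M) =
              - (\<Sum>i\<in>UNIV. of_int (\<nu>$i * w$i) / of_nat M) + (\<Sum>i\<in>UNIV. of_int (r$i) * zw$i :: complex)"
          by (simp add: zw_def sum_negf[symmetric] sum.distrib[symmetric] algebra_simps add_divide_distrib[symmetric] diff_divide_distrib)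
        show ?thesis unfolding g_def e ee_add by (simp only: mult.left_commute)
      qed
      then have gw: "g w = (\<lambda>r. ee (- (\<Sum>i\<in>UNIV. of_int (\<nu>$i * w$i) / of_nat M)) * (a r * ee (\<Sum>i\<in>UNIV. of_int (r$i) * zw$i)))"
        by (intro ext) 
      have "infsum (g w) UNIV = ee (- (\<Sum>i\<in>UNIV. of_int (\<nu>$i * w$i) / of_nat M)) * infsum (\<lambda>r. a r * ee (\<Sum>i\<in>UNIV. of_int (r$i) * zw$i)) UNIV"
        unfolding gw by (rule infsum_cmult_right')
      then show ?thesis using z0 by simp
    qed
    have "0 = (\<Sum>w\<in>WW M. infsum (g w) UNIV)" using step1 by simp
    also have "\<dots> = infsum (\<lambda>r. \<Sum>w\<in>WW M. g w r) UNIV"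
      using sum_infsum_swap[of "WW M" g UNIV, OF WW_finite gs] by simp
    also have "\<dots> = infsum (\<lambda>r. a r * (if r \<in> R then N else 0)) UNIV"
    proof (rule infsum_cong)
      fix r
      have "(\<Sum>w\<in>WW M. g w r) = a r * (\<Sum>w\<in>WW M. ee (\<Sum>i\<in>UNIV. of_int ((r - \<nu>)$i * w$i) / of_nat M))"
        by (simp add: g_def sum_distrib_left)
      also have "\<dots> = a r * (if r \<in> R then N else 0)"
        unfolding char_sum[OF M0] by (simp add: R_def N_def)
      finally show "(\<Sum>w\<in>WW M. g w r) = a r * (if r \<in> R then N else 0)" .
    qed
    also have "\<dots> = infsum (\<lambda>r. a r * N) R"
      by (rule infsum_cong_neutral) auto
    also have "\<dots> = infsum a R * N" by (rule infsum_cmult_left')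
    finally show ?thesis using N0 by simp
  qed
  have nuR: "\<nu> \<in> R" by (simp add: R_def)
  have "infsum a ({\<nu>} \<union> (R - {\<nu>})) = infsum a {\<nu>} + infsum a (R - {\<nu>})"
    by (rule infsum_Un_disjoint[OF asum asum]) auto
  moreover have "{\<nu>} \<union> (R - {\<nu>}) = R" using nuR by auto
  ultimately have "a \<nu> + infsum a (R - {\<nu>}) = 0" using key by simp
  then have "a \<nu> = - infsum a (R - {\<nu>})" by (simp add: eq_neg_iff_add_eq_0)
  then have "\<epsilon> = norm (infsum a (R - {\<nu>}))" by (simp add: \<epsilon>_def)
  also have "\<dots> \<le> infsum (\<lambda>r. norm (a r)) (R - {\<nu>})"
    by (rule norm_infsum_bound) (rule nsum)
  also have "\<dots> \<le> infsum (\<lambda>r. norm (a r)) (UNIV - F0)"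
    by (rule infsum_mono2[OF nsum nsum RF]) simp
  finally show False using F0(2) by simp
qed



lemma infsum_diff_c:
  fixes f g :: "'a \<Rightarrow> complex"
  assumes "f summable_on A" "g summable_on A"
  shows "infsum (\<lambda>x. f x - g x) A = infsum f A - infsum g A"
proof -
  have "infsum (\<lambda>x. f x + - g x) A = infsum f A + infsum (\<lambda>x. - g x) A"
    by (rule infsum_add[OF assms(1)]) (simp add: summable_on_uminus assms(2))
  then show ?thesis by (simp add: infsum_uminus)
qed

lemma pd_of_spe: "symmetric_pd_even L \<Longrightarrow> pd L"
  unfolding symmetric_pd_even_def pd_def by (metis realmat_transpose)

lemma realmat_L':
  "realmat (transpose s ** L ** s) = transpose (realmat s) ** realmat L ** realmat s"
  by (simp add: realmat_mul realmat_transpose)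

lemma invertible_s:
  fixes s :: "int^'n^'n"
  assumes "det s \<noteq> 0"
  shows "invertible (realmat s)"
  using assms by (simp add: invertible_det_nz det_realmat)

lemma pd_L':
  fixes s L :: "int^'n^'n"
  assumes "pd L" "det s \<noteq> 0"
  shows "pd (transpose s ** L ** s)"
proof -
  let ?S = "realmat s" and ?A = "realmat L"
  have sym: "transpose ?A = ?A" using assms(1) pd_def by blast
  have pos: "\<forall>x. x \<noteq> 0 \<longrightarrow> x \<bullet> (?A *v x) > 0" using assms(1) pd_def by blast
  have inj: "inj ((*v) ?S)" using inj_matrix_vector_mult[OF invertible_s[OF assms(2)]] .
  have "transpose (transpose ?S ** ?A ** ?S) = transpose ?S ** ?A ** ?S"
    by (simp add: matrix_transpose_mul sym matrix_mul_assoc)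
  moreover have "\<forall>x. x \<noteq> 0 \<longrightarrow> x \<bullet> ((transpose ?S ** ?A ** ?S) *v x) > 0"
  proof (intro allI impI)
    fix x :: "real^'n" assume x: "x \<noteq> 0"
    have Sx: "?S *v x \<noteq> 0" using inj x by (metis injD matrix_vector_mult_0_right)
    have "x \<bullet> ((transpose ?S ** ?A ** ?S) *v x) = x \<bullet> (transpose ?S *v (?A *v (?S *v x)))"
      by (simp add: matrix_vector_mul_assoc matrix_mul_assoc)
    also have "\<dots> = (?S *v x) \<bullet> (?A *v (?S *v x))"
      by (metis dot_lmul_matrix inner_commute transpose_matrix_vector)
    finally show "x \<bullet> ((transpose ?S ** ?A ** ?S) *v x) > 0" using pos Sx by simp
  qed
  ultimately show ?thesis unfolding pd_def realmat_L' by blast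
qed

lemma inv_qf_L':
  fixes s L :: "int^'n^'n"
  assumes "pd L" "det s \<noteq> 0"
  shows "inv_qf (transpose s ** L ** s) (transpose s *v r) = inv_qf L r"
proof -
  let ?S = "realmat s" and ?A = "realmat L"
  let ?A' = "realmat (transpose s ** L ** s)"
  have invA: "invertible ?A" using pd_invertible[OF assms(1)] .
  have invS: "invertible ?S" using invertible_s[OF assms(2)] .
  have invA': "invertible ?A'" using pd_invertible[OF pd_L'[OF assms]] .
  define v where "v = rv r"
  define y where "y = matrix_inv ?A *v v"
  define y' where "y' = matrix_inv ?S *v y"
  have Ay: "?A *v y = v" using inv_apply2[OF invA] y_def by simp
  have Sy': "?S *v y' = y" using inv_apply2[OF invS] y'_def by simp
  have rvT: "rv (transpose s *v r) = transpose ?S *v v"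
    by (simp only: rv_mult realmat_transpose v_def)
  have "?A' *v y' = transpose ?S *v v"
    unfolding realmat_L' by (simp add: matrix_vector_mul_assoc[symmetric] Sy' Ay)
  then have "matrix_inv ?A' *v (transpose ?S *v v) = y'" by (rule inv_apply[OF invA'])
  then have "inv_qf (transpose s ** L ** s) (transpose s *v r) = (transpose ?S *v v) \<bullet> y'"
    unfolding inv_qf_rv rvT by simp
  also have "\<dots> = v \<bullet> (?S *v y')"
    by (metis dot_lmul_matrix transpose_matrix_vector)
  also have "\<dots> = inv_qf L r" unfolding Sy' y_def v_def inv_qf_rv ..
  finally show ?thesis .
qed

lemma lin_cmv:
  fixes s :: "int^'n^'n"
  shows "(\<Sum>i\<in>UNIV. of_int (r$i) * (cmv s z)$i) = (\<Sum>i\<in>UNIV. of_int ((transpose s *v r)$i) * z$i)"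
proof -
  have "(\<Sum>i\<in>UNIV. of_int (r$i) * (cmv s z)$i) = (\<Sum>i\<in>UNIV. \<Sum>j\<in>UNIV. of_int (r$i) * of_int (s$i$j) * z$j)"
    by (simp add: cmv_def sum_distrib_left mult.assoc)
  also have "\<dots> = (\<Sum>j\<in>UNIV. \<Sum>i\<in>UNIV. of_int (r$i) * of_int (s$i$j) * z$j)"
    by (rule sum.swap)
  also have "\<dots> = (\<Sum>j\<in>UNIV. of_int ((transpose s *v r)$j) * z$j)"
    by (simp add: matrix_vector_mult_def transpose_def of_int_sum sum_distrib_right sum_distrib_left mult_ac)
  finally show ?thesis .
qed

lemma tM_cmv:
  fixes s L :: "int^'n^'n"
  assumes "pd L" "det s \<noteq> 0"
  shows "tM L \<tau> r (cmv s z) = tM (transpose s ** L ** s) \<tau> (transpose s *v r) z"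
  unfolding tM_def lin_cmv inv_qf_L'[OF assms] ..

lemma inj_T:
  fixes s :: "int^'n^'n"
  assumes "det s \<noteq> 0"
  shows "inj (\<lambda>r. transpose s *v r)"
proof (rule injI)
  fix x y assume "transpose s *v x = transpose s *v y"
  then have "rv (transpose s *v x) = rv (transpose s *v y)" by simp
  then have "transpose (realmat s) *v rv x = transpose (realmat s) *v rv y"
    by (simp only: rv_mult realmat_transpose)
  moreover have "invertible (transpose (realmat s))"
    using invertible_s[OF assms] by (simp add: invertible_det_nz)
  ultimately have "rv x = rv y" using inj_matrix_vector_mult by (metis injD)
  then show "x = y" by (rule rv_inj)
qed



theorem proposition5p1:
  fixes L s :: "int^'n^'n" and k :: int
    and \<phi> :: "complex \<Rightarrow> complex^'n \<Rightarrow> complex"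
    and h h' :: "(int^'n) set \<Rightarrow> complex \<Rightarrow> complex"
  assumes "symmetric_pd_even L"
    and "det s \<noteq> 0"
    and "jacobi_form k L \<phi>"
    and "theta_decomp L \<phi> h"
    and "theta_decomp (transpose s ** L ** s) (U_op s \<phi>) h'"
  shows "(\<forall>\<nu> \<mu> :: int^'n. \<forall>\<tau>. Im \<tau> > 0 \<longrightarrow>
            \<nu> - transpose s *v \<mu> \<in> range (\<lambda>x. transpose s *v (L *v x)) \<longrightarrow>
            h' (lat_coset (transpose s ** L ** s) \<nu>) \<tau> = h (lat_coset L \<mu>) \<tau>) \<and>
         (\<forall>\<nu> :: int^'n. \<forall>\<tau>. Im \<tau> > 0 \<longrightarrow>
            \<nu> \<notin> range (\<lambda>x. transpose s *v x) \<longrightarrow>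
            h' (lat_coset (transpose s ** L ** s) \<nu>) \<tau> = 0)"
proof -
  define L' where "L' = transpose s ** L ** s"
  define T where "T = (\<lambda>r::int^'n. transpose s *v r)"
  have pdL: "pd L" using pd_of_spe[OF assms(1)] .
  have pdL': "pd L'" unfolding L'_def using pd_L'[OF pdL assms(2)] .
  have injT: "inj T" unfolding T_def using inj_T[OF assms(2)] .
  have dec: "\<And>\<tau> z. Im \<tau> > 0 \<Longrightarrow> \<phi> \<tau> z = (\<Sum>C\<in>disc L. theta L C \<tau> z * h C \<tau>)"
    using assms(4) unfolding theta_decomp_def by blast
  have dec': "\<And>\<tau> z. Im \<tau> > 0 \<Longrightarrow> U_op s \<phi> \<tau> z = (\<Sum>C\<in>disc L'. theta L' C \<tau> z * h' C \<tau>)"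
    using assms(5) unfolding theta_decomp_def L'_def by blast
  define g where "g \<tau> \<rho> = (if \<rho> \<in> range T then h (lat_coset L (inv T \<rho>)) \<tau> else 0)" for \<tau> \<rho>
  have main: "h' (lat_coset L' \<rho>) \<tau> = g \<tau> \<rho>" if t: "Im \<tau> > 0" for \<rho> \<tau>
  proof -
    define c where "c \<rho> = h' (lat_coset L' \<rho>) \<tau> - g \<tau> \<rho>" for \<rho>
    define a where "a \<rho> = c \<rho> * ee (\<tau> * of_real (inv_qf L' \<rho>) / 2)" for \<rho>
    define Bh where "Bh = (\<Sum>C\<in>disc L. norm (h C \<tau>))"
    define Bh' where "Bh' = (\<Sum>C\<in>disc L'. norm (h' C \<tau>))"
    have finL: "finite (disc L)" using finite_disc[OF pdL] .
    have finL': "finite (disc L')" using finite_disc[OF pdL'] .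
    have b1: "norm (h' (lat_coset L' \<rho>) \<tau>) \<le> Bh'" for \<rho>
      unfolding Bh'_def by (rule member_le_sum[where f = "\<lambda>C. norm (h' C \<tau>)", OF _ _ finL']) (auto simp: disc_def)
    have b2: "norm (h (lat_coset L r) \<tau>) \<le> Bh" for r
      unfolding Bh_def by (rule member_le_sum[where f = "\<lambda>C. norm (h C \<tau>)", OF _ _ finL]) (auto simp: disc_def)
    have Bh0: "Bh \<ge> 0" unfolding Bh_def by (simp add: sum_nonneg)
    have b3: "norm (g \<tau> \<rho>) \<le> Bh" for \<rho> using b2 Bh0 by (simp add: g_def)
    have bc: "norm (c \<rho>) \<le> Bh' + Bh" for \<rho>
      unfolding c_def using norm_triangle_ineq4[of "h' (lat_coset L' \<rho>) \<tau>" "g \<tau> \<rho>"] b1[of \<rho>] b3[of \<rho>] by linarith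
    have aee: "a \<rho> * ee (\<Sum>i\<in>UNIV. of_int (\<rho>$i) * z$i) = c \<rho> * tM L' \<tau> \<rho> z" for \<rho> z
      by (simp add: a_def tM_def ee_add)
    have as: "(\<lambda>\<rho>. norm (a \<rho>)) summable_on UNIV"
    proof -
      have "(\<lambda>\<rho>. c \<rho> * tM L' \<tau> \<rho> 0) summable_on UNIV"
        by (rule coef_summable[OF pdL' t bc])
      then have "(\<lambda>\<rho>. norm (c \<rho> * tM L' \<tau> \<rho> 0)) summable_on UNIV"
        by (rule summable_on_iff_abs_summable_on_complex[THEN iffD1])
      moreover have "c \<rho> * tM L' \<tau> \<rho> 0 = a \<rho>" for \<rho>
        using aee[of \<rho> 0] by simp
      ultimately show ?thesis by simp
    qed
    have z0: "infsum (\<lambda>\<rho>. a \<rho> * ee (\<Sum>i\<in>UNIV. of_int (\<rho>$i) * z$i)) UNIV = 0" for z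
    proof -
      have s1: "(\<lambda>\<rho>. h' (lat_coset L' \<rho>) \<tau> * tM L' \<tau> \<rho> z) summable_on UNIV"
        by (rule coef_summable[OF pdL' t b1])
      have s2: "(\<lambda>\<rho>. g \<tau> \<rho> * tM L' \<tau> \<rho> z) summable_on UNIV"
        by (rule coef_summable[OF pdL' t b3])
      have e1: "infsum (\<lambda>\<rho>. h' (lat_coset L' \<rho>) \<tau> * tM L' \<tau> \<rho> z) UNIV = \<phi> \<tau> (cmv s z)"
        using theta_sum[OF pdL' t, of z "\<lambda>C. h' C \<tau>"] dec'[OF t, of z] by (simp add: U_op_def)
      have "infsum (\<lambda>\<rho>. g \<tau> \<rho> * tM L' \<tau> \<rho> z) UNIV = infsum (\<lambda>\<rho>. g \<tau> \<rho> * tM L' \<tau> \<rho> z) (range T)"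
        by (rule infsum_cong_neutral) (auto simp: g_def)
      also have "\<dots> = infsum ((\<lambda>\<rho>. g \<tau> \<rho> * tM L' \<tau> \<rho> z) \<circ> T) UNIV"
        by (rule infsum_reindex) (use injT in \<open>simp add: inj_on_def inj_def\<close>)
      also have "\<dots> = infsum (\<lambda>r. h (lat_coset L r) \<tau> * tM L \<tau> r (cmv s z)) UNIV"
      proof (rule infsum_cong)
        fix r
        have "g \<tau> (T r) = h (lat_coset L r) \<tau>" using injT by (simp add: g_def)
        moreover have "tM L' \<tau> (T r) z = tM L \<tau> r (cmv s z)"
          unfolding L'_def T_def using tM_cmv[OF pdL assms(2)] by simp
        ultimately show "((\<lambda>\<rho>. g \<tau> \<rho> * tM L' \<tau> \<rho> z) \<circ> T) r = h (lat_coset L r) \<tau> * tM L \<tau> r (cmv s z)"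
          by simp
      qed
      also have "\<dots> = \<phi> \<tau> (cmv s z)"
        using theta_sum[OF pdL t, of "cmv s z" "\<lambda>C. h C \<tau>"] dec[OF t, of "cmv s z"] by simp
      finally have e2: "infsum (\<lambda>\<rho>. g \<tau> \<rho> * tM L' \<tau> \<rho> z) UNIV = \<phi> \<tau> (cmv s z)" .
      have "infsum (\<lambda>\<rho>. a \<rho> * ee (\<Sum>i\<in>UNIV. of_int (\<rho>$i) * z$i)) UNIV =
            infsum (\<lambda>\<rho>. h' (lat_coset L' \<rho>) \<tau> * tM L' \<tau> \<rho> z - g \<tau> \<rho> * tM L' \<tau> \<rho> z) UNIV"
        by (rule infsum_cong) (simp only: aee c_def left_diff_distrib)
      also have "\<dots> = 0" using infsum_diff_c[OF s1 s2] e1 e2 by simp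
      finally show ?thesis .
    qed
    have "a \<rho> = 0" by (rule fourier_unique[OF as z0])
    then have "c \<rho> = 0" by (simp add: a_def ee_nonzero)
    then show ?thesis by (simp add: c_def)
  qed
  show ?thesis
  proof (intro conjI allI impI)
    fix \<nu> \<mu> :: "int^'n" and \<tau> :: complex
    assume t: "Im \<tau> > 0" and m: "\<nu> - transpose s *v \<mu> \<in> range (\<lambda>x. transpose s *v (L *v x))"
    then obtain x where x: "\<nu> - transpose s *v \<mu> = transpose s *v (L *v x)" by blast
    have nu: "\<nu> = T (\<mu> + L *v x)"
      using x unfolding T_def by (simp add: matrix_vector_right_distrib algebra_simps)
    have "g \<tau> \<nu> = h (lat_coset L (\<mu> + L *v x)) \<tau>" using nu injT by (simp add: g_def)
    also have "\<dots> = h (lat_coset L \<mu>) \<tau>" by (simp add: lat_coset_shift)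
    finally show "h' (lat_coset (transpose s ** L ** s) \<nu>) \<tau> = h (lat_coset L \<mu>) \<tau>"
      using main[OF t] unfolding L'_def by simp
  next
    fix \<nu> :: "int^'n" and \<tau> :: complex
    assume t: "Im \<tau> > 0" and n: "\<nu> \<notin> range (\<lambda>x. transpose s *v x)"
    then have "g \<tau> \<nu> = 0" by (simp add: g_def T_def)
    then show "h' (lat_coset (transpose s ** L ** s) \<nu>) \<tau> = 0"
      using main[OF t] unfolding L'_def by simp
  qed
qed


end
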